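(* Let $X$ be a complete CAT(0) space, $T:X\to X$ nonexpansive, and $(\gamma_n)$ a sequence of positive reals. Then the family $(R_{T,\gamma_n})_{n\in\mathbb{N}}$ is jointly firmly nonexpansive with respect to $(\gamma_n)$.
   Context: A geodesic space $(X,d)$ is CAT(0) if for all $z\in X$, all geodesics $\gamma:[a,b]\to X$ and all $t\in[0,1]$, $d^2(z,\gamma((1-t)a+tb))\le(1-t)d^2(z,\gamma(a))+td^2(z,\gamma(b))-t(1-t)d^2(\gamma(a),\gamma(b))$; $(1-t)x+ty$ denotes the point at distance $t\,d(x,y)$ from $x$ on the unique geodesic from $x$ to $y$. For $\gamma>0$ and $x\in X$, $R_{T,\gamma}x$ is the unique fixed point of the contraction $y\mapsto\frac1{1+\gamma}x+\frac{\gamma}{1+\gamma}Ty$, i.e. $R_{T,\gamma}x=\frac1{1+\gamma}x+\frac\gamma{1+\gamma}TR_{T,\gamma}x$ (the resolvent of order $\gamma$ of $T$). $(T_n)$ is jointly firmly nonexpansive w.r.t. $(\gamma_n)$ if for all $n,m$, $x,y\in X$, $\alpha,\beta\in[0,1]$ with $(1-\alpha)\gamma_n=(1-\beta)\gamma_m$: $d(T_nx,T_my)\le d((1-\alpha)x+\alpha T_nx,(1-\beta)y+\beta T_my)$. *)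

theory Defs
  imports "HOL-Analysis.Analysis"
begin

definition geodesic :: "(real \<Rightarrow> 'a::metric_space) \<Rightarrow> real \<Rightarrow> real \<Rightarrow> bool" where
  "geodesic g a b \<longleftrightarrow> a \<le> b \<and>
     (\<forall>s\<in>{a..b}. \<forall>t\<in>{a..b}. dist (g s) (g t) = \<bar>s - t\<bar>)"

definition geodesic_space :: "'a::metric_space itself \<Rightarrow> bool" where
  "geodesic_space _ \<longleftrightarrow>
     (\<forall>x y::'a. \<exists>g. geodesic g 0 (dist x y) \<and> g 0 = x \<and> g (dist x y) = y)"

definition CAT0 :: "'a::metric_space itself \<Rightarrow> bool" where
  "CAT0 X \<longleftrightarrow> geodesic_space X \<and>
     (\<forall>(z::'a) g a b t. geodesic g a b \<longrightarrow> 0 \<le> t \<longrightarrow> t \<le> 1 \<longrightarrow>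
        (dist z (g ((1 - t) * a + t * b)))\<^sup>2 \<le>
          (1 - t) * (dist z (g a))\<^sup>2 + t * (dist z (g b))\<^sup>2
          - t * (1 - t) * (dist (g a) (g b))\<^sup>2)"

text \<open>cc x y t denotes (1-t)x + ty: the point at distance t d(x,y) from x on the
  (unique) geodesic from x to y.\<close>
definition cc :: "'a::metric_space \<Rightarrow> 'a \<Rightarrow> real \<Rightarrow> 'a" where
  "cc x y t = (THE z. \<exists>g. geodesic g 0 (dist x y) \<and> g 0 = x \<and> g (dist x y) = y
                          \<and> z = g (t * dist x y))"

definition nonexpansive :: "('a::metric_space \<Rightarrow> 'a) \<Rightarrow> bool" where
  "nonexpansive T \<longleftrightarrow> (\<forall>x y. dist (T x) (T y) \<le> dist x y)"

definition resolvent :: "('a::metric_space \<Rightarrow> 'a) \<Rightarrow> real \<Rightarrow> 'a \<Rightarrow> 'a" where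
  "resolvent T \<gamma> x = (THE y. y = cc x (T y) (\<gamma> / (1 + \<gamma>)))"

definition jointly_firmly_nonexpansive ::
  "(nat \<Rightarrow> 'a::metric_space \<Rightarrow> 'a) \<Rightarrow> (nat \<Rightarrow> real) \<Rightarrow> bool" where
  "jointly_firmly_nonexpansive Ts \<gamma> \<longleftrightarrow>
     (\<forall>n m x y \<alpha> \<beta>. 0 \<le> \<alpha> \<longrightarrow> \<alpha> \<le> 1 \<longrightarrow> 0 \<le> \<beta> \<longrightarrow> \<beta> \<le> 1 \<longrightarrow>
        (1 - \<alpha>) * \<gamma> n = (1 - \<beta>) * \<gamma> m \<longrightarrow>
        dist (Ts n x) (Ts m y) \<le> dist (cc x (Ts n x) \<alpha>) (cc y (Ts m y) \<beta>))"

end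

theory Submission
  imports Defs
begin

lemma cat_ineq:
  assumes "CAT0 TYPE('a::metric_space)" "geodesic g a b" "0 \<le> t" "t \<le> 1"
  shows "(dist (z::'a) (g ((1 - t) * a + t * b)))\<^sup>2 \<le>
          (1 - t) * (dist z (g a))\<^sup>2 + t * (dist z (g b))\<^sup>2
          - t * (1 - t) * (dist (g a) (g b))\<^sup>2"
  using assms unfolding CAT0_def by blast

lemma geo_ex:
  assumes "CAT0 TYPE('a::metric_space)"
  shows "\<exists>g. geodesic g 0 (dist x y) \<and> g 0 = x \<and> g (dist x y) = (y::'a)"
  using assms unfolding CAT0_def geodesic_space_def by blast

lemma geo_unique:
  assumes C: "CAT0 TYPE('a::metric_space)"
    and g: "geodesic g 0 (dist x y)" "g 0 = x" "g (dist x y) = (y::'a)"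
    and h: "geodesic h 0 (dist x y)" "h 0 = x" "h (dist x y) = y"
    and t: "0 \<le> t" "t \<le> 1"
  shows "g (t * dist x y) = h (t * dist x y)"
proof -
  define D where "D = dist x y"
  have D0: "0 \<le> D" by (simp add: D_def)
  have s: "t * D \<in> {0..D}" using t D0 by (simp add: mult_left_le_one_le)
  have e: "(1 - t) * 0 + t * D = t * D" by simp
  have i: "(dist (h (t*D)) (g ((1 - t) * 0 + t * D)))\<^sup>2 \<le>
          (1 - t) * (dist (h (t*D)) (g 0))\<^sup>2 + t * (dist (h (t*D)) (g D))\<^sup>2
          - t * (1 - t) * (dist (g 0) (g D))\<^sup>2"
    using cat_ineq[OF C g(1)[folded D_def] t] by blast
  have d1: "dist (h (t*D)) (g 0) = t * D"
    using h(1) s D0 t unfolding geodesic_def D_def[symmetric]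
    by (auto simp: g(2) h(2)[symmetric])
  have "dist (h (t*D)) (h D) = D - t * D"
    using h(1) s D0 t unfolding geodesic_def D_def[symmetric] by auto
  hence d2: "dist (h (t*D)) (g D) = D - t * D"
    using g(3) h(3) unfolding D_def[symmetric] by simp
  have d3: "dist (g 0) (g D) = D" using g unfolding D_def by simp
  have "(1 - t) * (t*D)\<^sup>2 + t * (D - t*D)\<^sup>2 - t * (1 - t) * D\<^sup>2 = 0"
    by (simp add: power2_eq_square algebra_simps)
  with i d1 d2 d3 e have "(dist (h (t*D)) (g (t*D)))\<^sup>2 \<le> 0" by simp
  hence "dist (h (t*D)) (g (t*D)) = 0" by simp
  thus ?thesis unfolding D_def by simp
qed

lemma cc_eq:
  assumes C: "CAT0 TYPE('a::metric_space)"
    and g: "geodesic g 0 (dist x y)" "g 0 = x" "g (dist x y) = (y::'a)"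
    and t: "0 \<le> t" "t \<le> 1"
  shows "cc x y t = g (t * dist x y)"
  unfolding cc_def
proof (rule the_equality)
  show "\<exists>ga. geodesic ga 0 (dist x y) \<and> ga 0 = x \<and> ga (dist x y) = y \<and> g (t * dist x y) = ga (t * dist x y)"
    using g by blast
next
  fix z assume "\<exists>ga. geodesic ga 0 (dist x y) \<and> ga 0 = x \<and> ga (dist x y) = y \<and> z = ga (t * dist x y)"
  then obtain h where "geodesic h 0 (dist x y)" "h 0 = x" "h (dist x y) = y" "z = h (t * dist x y)" by blast
  thus "z = g (t * dist x y)" using geo_unique[OF C g _ _ _ t] by metis
qed

lemma cc_ineq:
  assumes C: "CAT0 TYPE('a::metric_space)" and t: "0 \<le> t" "t \<le> 1"
  shows "(dist (z::'a) (cc x y t))\<^sup>2 \<le>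
          (1 - t) * (dist z x)\<^sup>2 + t * (dist z y)\<^sup>2 - t * (1 - t) * (dist x y)\<^sup>2"
proof -
  obtain g where g: "geodesic g 0 (dist x y)" "g 0 = x" "g (dist x y) = y" using geo_ex[OF C] by blast
  have "cc x y t = g ((1 - t) * 0 + t * dist x y)" using cc_eq[OF C g t] by simp
  thus ?thesis using cat_ineq[OF C g(1) t, of z] g by simp
qed

lemma cc_dist:
  assumes C: "CAT0 TYPE('a::metric_space)" and t: "0 \<le> t" "t \<le> 1"
  shows "dist x (cc x y t) = t * dist x (y::'a)" "dist (cc x y t) y = (1 - t) * dist x y"
proof -
  obtain g where g: "geodesic g 0 (dist x y)" "g 0 = x" "g (dist x y) = y" using geo_ex[OF C] by blast
  define D where "D = dist x y"
  have D0: "0 \<le> D" by (simp add: D_def)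
  have s: "t * D \<in> {0..D}" using t D0 by (simp add: mult_left_le_one_le)
  have c: "cc x y t = g (t * D)" using cc_eq[OF C g t] D_def by simp
  have "dist (g 0) (g (t*D)) = t * D" using g(1) s D0 t unfolding geodesic_def D_def[symmetric] by auto
  thus "dist x (cc x y t) = t * dist x y" using c g(2) D_def by simp
  have "dist (g (t*D)) (g D) = D - t * D" using g(1) s D0 t unfolding geodesic_def D_def[symmetric] by auto
  thus "dist (cc x y t) y = (1 - t) * dist x y" using c g(3) D_def by (simp add: algebra_simps)
qed

lemma cc_char:
  assumes C: "CAT0 TYPE('a::metric_space)" and t: "0 \<le> t" "t \<le> 1"
    and d: "dist x z = t * dist x y" "dist z y = (1 - t) * dist x (y::'a)"
  shows "z = cc x y t"
proof -
  have i: "(dist z (cc x y t))\<^sup>2 \<le> (1 - t) * (dist z x)\<^sup>2 + t * (dist z y)\<^sup>2 - t * (1 - t) * (dist x y)\<^sup>2"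
    using cc_ineq[OF C t] .
  have "(1 - t) * (t * dist x y)\<^sup>2 + t * ((1 - t) * dist x y)\<^sup>2 - t * (1 - t) * (dist x y)\<^sup>2 = 0"
    by (simp add: power2_eq_square algebra_simps)
  with i d have "(dist z (cc x y t))\<^sup>2 \<le> 0" by (simp add: dist_commute)
  thus ?thesis by simp
qed

lemma cc_sym:
  assumes C: "CAT0 TYPE('a::metric_space)" and t: "0 \<le> t" "t \<le> 1"
  shows "cc x y t = cc y (x::'a) (1 - t)"
  apply (rule cc_char[OF C])
  using t cc_dist[OF C t, of x y] by (auto simp: dist_commute)

lemma cc_lip:
  assumes C: "CAT0 TYPE('a::metric_space)" and t: "0 \<le> t" "t \<le> 1"
  shows "dist (cc x y t) (cc x z t) \<le> t * dist y (z::'a)"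
proof -
  define p where "p = cc x y t"
  define q where "q = cc x z t"
  have 1: "(dist q p)\<^sup>2 \<le> (1 - t) * (dist q x)\<^sup>2 + t * (dist q y)\<^sup>2 - t * (1 - t) * (dist x y)\<^sup>2"
    unfolding p_def using cc_ineq[OF C t] .
  have 2: "(dist y q)\<^sup>2 \<le> (1 - t) * (dist y x)\<^sup>2 + t * (dist y z)\<^sup>2 - t * (1 - t) * (dist x z)\<^sup>2"
    unfolding q_def using cc_ineq[OF C t] .
  have 3: "dist q x = t * dist x z" unfolding q_def using cc_dist(1)[OF C t] by (simp add: dist_commute)
  have 4: "t * (dist q y)\<^sup>2 \<le> t * ((1 - t) * (dist y x)\<^sup>2 + t * (dist y z)\<^sup>2 - t * (1 - t) * (dist x z)\<^sup>2)"
    using 2 t by (simp add: mult_left_mono dist_commute)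
  have 1: "(dist q p)\<^sup>2 \<le> (1 - t) * (t * dist x z)\<^sup>2 + t * (dist q y)\<^sup>2 - t * (1 - t) * (dist x y)\<^sup>2"
    using 1 3 by simp
  with 4 have "(dist q p)\<^sup>2 \<le> (1 - t) * (t * dist x z)\<^sup>2 + t * ((1 - t) * (dist y x)\<^sup>2 + t * (dist y z)\<^sup>2 - t * (1 - t) * (dist x z)\<^sup>2) - t * (1 - t) * (dist x y)\<^sup>2"
    by linarith
  also have "\<dots> = (t * dist y z)\<^sup>2" by (simp add: power2_eq_square algebra_simps dist_commute)
  finally have "(dist p q)\<^sup>2 \<le> (t * dist y z)\<^sup>2" by (simp add: dist_commute)
  hence "dist p q \<le> t * dist y z" using t by (meson power2_le_imp_le mult_nonneg_nonneg zero_le_dist)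
  thus ?thesis unfolding p_def q_def .
qed

lemma cc_conv:
  assumes C: "CAT0 TYPE('a::metric_space)" and t: "0 \<le> t" "t \<le> 1"
  shows "dist (cc a b t) (cc c d t) \<le> (1 - t) * dist a c + t * dist b (d::'a)"
proof -
  have "dist (cc a b t) (cc c d t) \<le> dist (cc a b t) (cc a d t) + dist (cc a d t) (cc c d t)"
    by (rule dist_triangle)
  also have "dist (cc a d t) (cc c d t) = dist (cc d a (1-t)) (cc d c (1-t))"
    using cc_sym[OF C t] by metis
  also have "\<dots> \<le> (1 - t) * dist a c" using cc_lip[OF C, of "1-t"] t by simp
  finally show ?thesis using cc_lip[OF C t, of a b d] by linarith
qed

lemma resolvent_fix:
  fixes T :: "'a::complete_space \<Rightarrow> 'a"
  assumes C: "CAT0 TYPE('a)" and T: "nonexpansive T" and g: "\<gamma> > 0"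
  shows "resolvent T \<gamma> x = cc x (T (resolvent T \<gamma> x)) (\<gamma> / (1 + \<gamma>))"
proof -
  define l where "l = \<gamma> / (1 + \<gamma>)"
  have l: "0 \<le> l" "l < 1" "l \<le> 1" using g by (auto simp: l_def field_simps)
  have "\<exists>!y. (\<lambda>y. cc x (T y) l) y = y"
  proof (rule banach_fix_type[of l "\<lambda>y. cc x (T y) l", OF l(1,2)], intro allI)
    fix u v
    have "dist (cc x (T u) l) (cc x (T v) l) \<le> l * dist (T u) (T v)" using cc_lip[OF C l(1,3)] .
    also have "\<dots> \<le> l * dist u v" using T l unfolding nonexpansive_def by (simp add: mult_left_mono)
    finally show "dist (cc x (T u) l) (cc x (T v) l) \<le> l * dist u v" .
  qed
  hence "\<exists>!y. y = cc x (T y) l" by metis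
  hence "resolvent T \<gamma> x = cc x (T (resolvent T \<gamma> x)) l"
    unfolding resolvent_def l_def[symmetric] by (rule theI')
  thus ?thesis unfolding l_def .
qed


lemma sub_cc:
  assumes C: "CAT0 TYPE('a::metric_space)" and a: "0 \<le> \<alpha>" "\<alpha> \<le> 1" and g: "\<gamma> > 0"
    and u: "u = cc x (w::'a) (\<gamma> / (1 + \<gamma>))"
  shows "u = cc (cc x u \<alpha>) w ((1 - \<alpha>) * \<gamma> / (1 + (1 - \<alpha>) * \<gamma>))"
proof -
  define l where "l = \<gamma> / (1 + \<gamma>)"
  define D where "D = dist x w"
  define p where "p = cc x u \<alpha>"
  define \<mu> where "\<mu> = (1 - \<alpha>) * \<gamma> / (1 + (1 - \<alpha>) * \<gamma>)"
  have l: "0 \<le> l" "l \<le> 1" using g by (auto simp: l_def field_simps)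
  have c0: "0 \<le> (1 - \<alpha>) * \<gamma>" using a g by simp
  have m: "0 \<le> \<mu>" "\<mu> \<le> 1" using c0 by (auto simp: \<mu>_def field_simps)
  have xu: "dist x u = l * D" and uw: "dist u w = (1 - l) * D"
    using cc_dist[OF C l, of x w] u unfolding l_def D_def by auto
  have xp: "dist x p = \<alpha> * (l * D)" and pu: "dist p u = (1 - \<alpha>) * (l * D)"
    using cc_dist[OF C a, of x u] xu unfolding p_def by auto
  have "dist p w \<le> dist p u + dist u w" by (rule dist_triangle)
  moreover have "dist x w \<le> dist x p + dist p w" by (rule dist_triangle)
  ultimately have pw: "dist p w = (1 - \<alpha> * l) * D" using pu uw xp unfolding D_def
    by (simp add: algebra_simps)
  have ne: "1 + (1 - \<alpha>) * \<gamma> \<noteq> 0" using c0 by linarith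
  have g1: "1 + \<gamma> \<noteq> 0" using g by linarith
  have q1: "1 - \<alpha> * l = (1 + (1 - \<alpha>) * \<gamma>) / (1 + \<gamma>)"
    unfolding l_def using g1 by (simp add: field_simps)
  have lam: "(1 - \<alpha>) * l = \<mu> * (1 - \<alpha> * l)"
    unfolding q1 unfolding \<mu>_def l_def using ne g1 by simp
  show ?thesis unfolding \<mu>_def[symmetric] p_def[symmetric]
  proof (rule cc_char[OF C m])
    show "dist p u = \<mu> * dist p w" using pu pw lam by (metis mult.assoc)
    have "(1 - \<mu>) * dist p w = (1 - \<alpha> * l) * D - \<mu> * (1 - \<alpha> * l) * D"
      using pw by (simp add: left_diff_distrib)
    also have "\<dots> = ((1 - \<alpha> * l) - \<mu> * (1 - \<alpha> * l)) * D" by (simp add: left_diff_distrib)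
    also have "(1 - \<alpha> * l) - \<mu> * (1 - \<alpha> * l) = 1 - l" using lam by (simp add: algebra_simps)
    finally show "dist u w = (1 - \<mu>) * dist p w" using uw by simp
  qed
qed

lemma res_nonexp:
  assumes C: "CAT0 TYPE('a::metric_space)" and T: "nonexpansive T" and m: "0 \<le> \<mu>" "\<mu> < 1"
    and u: "u = cc p (T u) \<mu>" and v: "v = cc q (T v) \<mu>"
  shows "dist u v \<le> dist p (q::'a)"
proof -
  have "dist u v \<le> (1 - \<mu>) * dist p q + \<mu> * dist (T u) (T v)"
    using cc_conv[OF C m(1)] m u v by (metis less_imp_le)
  also have "\<dots> \<le> (1 - \<mu>) * dist p q + \<mu> * dist u v"
    using T m unfolding nonexpansive_def by (simp add: mult_left_mono)
  finally have "(1 - \<mu>) * dist u v \<le> (1 - \<mu>) * dist p q" by (simp add: algebra_simps)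
  thus ?thesis using m by simp
qed

theorem proposition3p19:
  fixes T :: "'a::complete_space \<Rightarrow> 'a" and \<gamma> :: "nat \<Rightarrow> real"
  assumes "CAT0 TYPE('a)"
    and "nonexpansive T"
    and "\<And>n. \<gamma> n > 0"
  shows "jointly_firmly_nonexpansive (\<lambda>n. resolvent T (\<gamma> n)) \<gamma>"
  unfolding jointly_firmly_nonexpansive_def
proof (intro allI impI)
  fix n m x y \<alpha> \<beta> :: "_"
  assume a: "0 \<le> (\<alpha>::real)" "\<alpha> \<le> 1" and b: "0 \<le> (\<beta>::real)" "\<beta> \<le> 1"
    and e: "(1 - \<alpha>) * \<gamma> n = (1 - \<beta>) * \<gamma> m"
  define u where "u = resolvent T (\<gamma> n) x"
  define v where "v = resolvent T (\<gamma> m) y"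
  define c where "c = (1 - \<alpha>) * \<gamma> n"
  have c0: "0 \<le> c" using a assms(3)[of n] by (simp add: c_def)
  have hu: "u = cc (cc x u \<alpha>) (T u) (c / (1 + c))"
    unfolding c_def by (rule sub_cc[OF assms(1) a assms(3)]) (use resolvent_fix[OF assms] u_def in simp)
  have hv: "v = cc (cc y v \<beta>) (T v) (c / (1 + c))"
    unfolding c_def e by (rule sub_cc[OF assms(1) b assms(3)]) (use resolvent_fix[OF assms] v_def in simp)
  have "dist u v \<le> dist (cc x u \<alpha>) (cc y v \<beta>)"
    by (rule res_nonexp[OF assms(1,2) _ _ hu hv]) (use c0 in auto)
  thus "dist (resolvent T (\<gamma> n) x) (resolvent T (\<gamma> m) y)
        \<le> dist (cc x (resolvent T (\<gamma> n) x) \<alpha>) (cc y (resolvent T (\<gamma> m) y) \<beta>)"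
    unfolding u_def v_def .
qed

end
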